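(* Let $N\ge2$ and $T,\mu>0$. Let $x(t)=(x_1(t),\dots,x_N(t))$, $x_k(t)\in\mathbb{R}$, be a (Carathéodory) solution of $$\dot x_k(t)=\frac1N\sum_{l=1}^N M_{kl}(t)(x_l-x_k),\qquad k=1,\dots,N,$$ with Lebesgue measurable $M_{kl}:[0,+\infty)\to[0,1]$, such that $x_k(0)\ge\alpha$ for all $k$. Assume that the $(T,\mu)$-connectivity graph at time $0$, $G(0)$, contains the directed edge $i\to j$, i.e. $\frac1T\int_0^T M_{ij}(s)\,ds\ge\mu$. Then $$x_i(T)\ge\alpha+\eta\exp\!\left(-2\tfrac{N-1}{N}T\right)(x_j(0)-\alpha),\qquad \eta=\frac{\mu T}{N+\mu T}.$$
   Context: Given $T,\mu>0$, the $(T,\mu)$-connectivity graph at time $t\ge0$ is the directed graph $G(t)$ on nodes $\{1,\dots,N\}$ in which the arrow $i\to j$ exists iff $\frac1T\int_t^{t+T}M_{ij}(s)\,ds\ge\mu$. *)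

theory Defs
  imports "HOL-Analysis.Analysis"
begin

text \<open>Nodes are 1..N. The arrow i -> j belongs to the (T,mu)-connectivity graph G(t).\<close>
definition conn_edge ::
  "real \<Rightarrow> real \<Rightarrow> (nat \<Rightarrow> nat \<Rightarrow> real \<Rightarrow> real) \<Rightarrow> real \<Rightarrow> nat \<Rightarrow> nat \<Rightarrow> bool" where
  "conn_edge T \<mu> M t i j \<longleftrightarrow> (1 / T) * integral {t..t+T} (M i j) \<ge> \<mu>"

definition cons_rhs ::
  "nat \<Rightarrow> (nat \<Rightarrow> nat \<Rightarrow> real \<Rightarrow> real) \<Rightarrow> (nat \<Rightarrow> real \<Rightarrow> real) \<Rightarrow> nat \<Rightarrow> real \<Rightarrow> real" where
  "cons_rhs N M x k s = (1 / real N) * (\<Sum>l\<in>{1..N}. M k l s * (x l s - x k s))"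

text \<open>Caratheodory solution on [0,+inf): each x_k is the integral of the right-hand side
  (absolutely integrable on every [0,t]), i.e. x_k is absolutely continuous and satisfies
  the ODE almost everywhere.\<close>
definition caratheodory_solution ::
  "nat \<Rightarrow> (nat \<Rightarrow> nat \<Rightarrow> real \<Rightarrow> real) \<Rightarrow> (nat \<Rightarrow> real \<Rightarrow> real) \<Rightarrow> bool" where
  "caratheodory_solution N M x \<longleftrightarrow>
     (\<forall>k\<in>{1..N}. \<forall>t\<ge>0.
        cons_rhs N M x k absolutely_integrable_on {0..t} \<and>
        (cons_rhs N M x k has_integral (x k t - x k 0)) {0..t})"

end

theory Submission
  imports Defs
begin

lemma dini_eps:
  fixes F :: "real \<Rightarrow> real"
  assumes ab: "a \<le> b" and cont: "continuous_on {a..b} F" and e: "e > 0"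
    and loc: "\<And>s. s \<in> {a..<b} \<Longrightarrow> \<exists>d>0. \<forall>t. s < t \<and> t < s + d \<and> t \<le> b \<longrightarrow> F s - e * (t - s) \<le> F t"
  shows "F a - e * (b - a) \<le> F b"
proof -
  define S where "S = {t \<in> {a..b}. F a - e * (t - a) \<le> F t}"
  have cS: "closed S" unfolding S_def
    by (intro continuous_on_closed_Collect_le continuous_intros cont closed_atLeastAtMost)
  have aS: "a \<in> S" using ab unfolding S_def by auto
  have bS: "bdd_above S" unfolding S_def by (auto intro: bdd_aboveI[of _ b])
  define \<tau> where "\<tau> = Sup S"
  have tS: "\<tau> \<in> S" unfolding \<tau>_def using closed_contains_Sup[OF _ bS cS] aS by auto
  have "\<tau> = b"
  proof (rule ccontr)
    assume "\<tau> \<noteq> b"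
    with tS have tb: "\<tau> \<in> {a..<b}" unfolding S_def by auto
    from loc[OF tb] obtain d where d: "d > 0" "\<forall>t. \<tau> < t \<and> t < \<tau> + d \<and> t \<le> b \<longrightarrow> F \<tau> - e * (t - \<tau>) \<le> F t" by auto
    define t where "t = min b (\<tau> + d/2)"
    have t1: "\<tau> < t" "t < \<tau> + d" "t \<le> b" using tb d unfolding t_def by auto
    hence "F \<tau> - e * (t - \<tau>) \<le> F t" using d by auto
    moreover have "F a - e * (\<tau> - a) \<le> F \<tau>" using tS unfolding S_def by auto
    ultimately have "t \<in> S" using t1 tb unfolding S_def by (auto simp: algebra_simps)
    hence "t \<le> \<tau>" unfolding \<tau>_def using bS by (rule cSup_upper)
    with t1 show False by auto
  qed
  with tS show ?thesis unfolding S_def by auto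
qed

lemma dini_mono:
  fixes F :: "real \<Rightarrow> real"
  assumes ab: "a \<le> b" and cont: "continuous_on {a..b} F"
    and loc: "\<And>s e. s \<in> {a..<b} \<Longrightarrow> e > 0 \<Longrightarrow> \<exists>d>0. \<forall>t. s < t \<and> t < s + d \<and> t \<le> b \<longrightarrow> F s - e * (t - s) \<le> F t"
  shows "F a \<le> F b"
proof (rule ccontr)
  assume "\<not> F a \<le> F b"
  hence ne: "a < b" using ab by (cases "a = b") auto
  define e where "e = (F a - F b) / (2 * (b - a))"
  have e: "e > 0" using ne \<open>\<not> F a \<le> F b\<close> unfolding e_def by auto
  have "F a - e * (b - a) \<le> F b" by (rule dini_eps[OF ab cont e loc]) (use e in auto)
  moreover have "e * (b - a) = (F a - F b) / 2" unfolding e_def using ne by (simp add: field_simps)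
  ultimately have "F a - (F a - F b) / 2 \<le> F b" by metis
  then show False using \<open>\<not> F a \<le> F b\<close> by (simp add: field_simps)
qed


lemma carat_diff:
  assumes "caratheodory_solution N M x" "k \<in> {1..N}" "0 \<le> s" "s \<le> t"
  shows "cons_rhs N M x k integrable_on {s..t} \<and> x k t - x k s = integral {s..t} (cons_rhs N M x k)"
proof -
  let ?g = "cons_rhs N M x k"
  have ht: "(?g has_integral (x k t - x k 0)) {0..t}" and hs: "(?g has_integral (x k s - x k 0)) {0..s}"
    using assms unfolding caratheodory_solution_def by auto
  have it: "?g integrable_on {0..t}" using ht by auto
  have "integral {0..s} ?g + integral {s..t} ?g = integral {0..t} ?g"
    by (rule Henstock_Kurzweil_Integration.integral_combine[OF assms(3,4) it])
  moreover have "integral {0..t} ?g = x k t - x k 0" "integral {0..s} ?g = x k s - x k 0"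
    using ht hs by (auto intro: integral_unique)
  moreover have "?g integrable_on {s..t}" using it assms(3,4) by (intro integrable_subinterval_real[OF it]) auto
  ultimately show ?thesis by auto
qed

lemma carat_cont:
  assumes "caratheodory_solution N M x" "k \<in> {1..N}"
  shows "continuous_on {0..b} (x k)"
proof (cases "b \<ge> 0")
  case True
  let ?g = "cons_rhs N M x k"
  have it: "?g integrable_on {0..b}" using carat_diff[OF assms order_refl True] by auto
  have "continuous_on {0..b} (\<lambda>t. x k 0 + integral {0..t} ?g)"
    by (intro continuous_intros indefinite_integral_continuous_1 it)
  moreover have "\<And>t. t \<in> {0..b} \<Longrightarrow> x k 0 + integral {0..t} ?g = x k t"
    using carat_diff[OF assms order_refl] by force
  ultimately show ?thesis using continuous_on_cong by (metis (no_types, lifting))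
next
  case False
  then have "{0..b} = {}" by auto
  then show ?thesis by simp
qed

lemma min_cont:
  fixes f :: "nat \<Rightarrow> real \<Rightarrow> real"
  assumes "finite A" "A \<noteq> {}" "\<And>k. k \<in> A \<Longrightarrow> continuous_on S (f k)"
  shows "continuous_on S (\<lambda>t. Min ((\<lambda>k. f k t) ` A))"
  using assms
proof (induction A rule: finite_ne_induct)
  case (singleton x)
  then show ?case by simp
next
  case (insert a F)
  have "(\<lambda>t. Min ((\<lambda>k. f k t) ` insert a F)) = (\<lambda>t. min (f a t) (Min ((\<lambda>k. f k t) ` F)))"
    using insert by (auto simp: Min_insert)
  then show ?case using insert by (auto intro!: continuous_intros)
qed

lemma sum_bound:
  fixes M :: "nat \<Rightarrow> nat \<Rightarrow> real \<Rightarrow> real" and x :: "nat \<Rightarrow> real \<Rightarrow> real"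
  assumes N: "N \<ge> 1" and k: "k \<in> {1..N}" and l0: "l0 \<in> {1..N}" "l0 \<noteq> k"
    and Mb: "\<And>l. l \<in> {1..N} \<Longrightarrow> 0 \<le> M k l s \<and> M k l s \<le> 1"
    and xa: "\<And>l. l \<in> {1..N} \<Longrightarrow> x l s \<ge> \<alpha>"
  shows "(\<Sum>l\<in>{1..N}. M k l s * (x l s - x k s)) \<ge> M k l0 s * (x l0 s - \<alpha>) - (real N - 1) * (x k s - \<alpha>)"
proof -
  let ?A = "{1..N} - {k}"
  have "(\<Sum>l\<in>{1..N}. M k l s * (x l s - x k s)) = M k k s * (x k s - x k s) + (\<Sum>l\<in>?A. M k l s * (x l s - x k s))"
    using k by (intro sum.remove) auto
  also have "\<dots> = (\<Sum>l\<in>?A. M k l s * (x l s - x k s))" by simp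
  also have "\<dots> \<ge> (\<Sum>l\<in>?A. M k l s * (x l s - \<alpha>) - (x k s - \<alpha>))"
  proof (rule sum_mono)
    fix l assume l: "l \<in> ?A"
    have "M k l s * (x k s - \<alpha>) \<le> 1 * (x k s - \<alpha>)"
      using Mb[of l] xa[OF k] l by (intro mult_right_mono) auto
    then show "M k l s * (x l s - \<alpha>) - (x k s - \<alpha>) \<le> M k l s * (x l s - x k s)"
      by (simp add: algebra_simps)
  qed
  finally have 1: "(\<Sum>l\<in>?A. M k l s * (x l s - \<alpha>)) - real (card ?A) * (x k s - \<alpha>) \<le> (\<Sum>l\<in>{1..N}. M k l s * (x l s - x k s))"
    by (simp add: sum_subtractf)
  have "card ?A = N - 1" using k by auto
  hence 2: "real (card ?A) = real N - 1" using N by auto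
  have 3: "M k l0 s * (x l0 s - \<alpha>) \<le> (\<Sum>l\<in>?A. M k l s * (x l s - \<alpha>))"
    using l0 Mb xa by (intro member_le_sum) auto
  show ?thesis using 1 3 unfolding 2 by linarith
qed


lemma expo:
  fixes y g p :: "real \<Rightarrow> real"
  assumes c: "c \<ge> 0" and K: "K \<ge> 0" and b: "b \<ge> 0"
    and cont: "continuous_on {0..b} y"
    and ynn: "\<And>r. r \<in> {0..b} \<Longrightarrow> y r \<ge> 0"
    and diff: "\<And>s t. 0 \<le> s \<Longrightarrow> s \<le> t \<Longrightarrow> t \<le> b \<Longrightarrow> g integrable_on {s..t} \<and> y t - y s = integral {s..t} g"
    and pint: "p integrable_on {0..b}"
    and pnn: "\<And>r. r \<in> {0..b} \<Longrightarrow> p r \<ge> 0"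
    and gb: "\<And>r. r \<in> {0..b} \<Longrightarrow> g r \<ge> K * p r - c * y r"
  shows "y 0 \<le> exp (c * b) * y b - K * integral {0..b} p"
proof -
  define F where "F t = exp (c * t) * y t - K * integral {0..t} p" for t
  have "F 0 \<le> F b"
  proof (rule dini_mono[OF b])
    show "continuous_on {0..b} F" unfolding F_def
      by (intro continuous_intros cont indefinite_integral_continuous_1 pint)
  next
    fix s e :: real assume s: "s \<in> {0..<b}" and e: "e > 0"
    define E where "E = exp (c * s)"
    define \<eta> where "\<eta> = e / (c * E + 1)"
    have E1: "E \<ge> 1" unfolding E_def using c s by auto
    have cE: "c * E \<ge> 0" using c E1 by auto
    have \<eta>: "\<eta> > 0" unfolding \<eta>_def using e cE by auto
    have h8: "c * E * \<eta> \<le> e"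
    proof -
      have "c * E * \<eta> = e * (c * E / (c * E + 1))" unfolding \<eta>_def using cE by (simp add: field_simps)
      also have "\<dots> \<le> e * 1" using cE e by (intro mult_left_mono) auto
      finally show ?thesis by simp
    qed
    from cont s \<eta> obtain d where d: "d > 0" "\<forall>r\<in>{0..b}. dist r s < d \<longrightarrow> dist (y r) (y s) < \<eta>/2"
      unfolding continuous_on_iff by (metis atLeastAtMost_iff atLeastLessThan_iff half_gt_zero less_eq_real_def)
    show "\<exists>d>0. \<forall>t. s < t \<and> t < s + d \<and> t \<le> b \<longrightarrow> F s - e * (t - s) \<le> F t"
    proof (intro exI[of _ d] conjI allI impI)
      show "d > 0" by fact
      fix t assume t: "s < t \<and> t < s + d \<and> t \<le> b"
      define Ip where "Ip = integral {s..t} p"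
      define Iy where "Iy = integral {s..t} y"
      define Ig where "Ig = integral {s..t} g"
      have s0: "0 \<le> s" using s by auto
      have pit: "p integrable_on {0..t}" using t by (intro integrable_subinterval_real[OF pint]) auto
      have pst: "p integrable_on {s..t}" using t s by (intro integrable_subinterval_real[OF pint]) auto
      have yst: "y integrable_on {s..t}" using t s
        by (intro integrable_continuous_interval continuous_on_subset[OF cont]) auto
      have comb: "integral {0..t} p = integral {0..s} p + Ip"
        unfolding Ip_def using Henstock_Kurzweil_Integration.integral_combine[OF s0 _ pit] t by auto
      have h1: "y t - y s = Ig" and gst: "g integrable_on {s..t}" using diff[OF s0, of t] t unfolding Ig_def by auto
      have "integral {s..t} (\<lambda>r. K * p r - c * y r) \<le> Ig" unfolding Ig_def
        using s t by (intro integral_le integrable_diff integrable_on_mult_right pst yst gst gb) (auto intro!: integrable_on_mult_right pst yst)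
      moreover have "integral {s..t} (\<lambda>r. K * p r - c * y r) = K * Ip - c * Iy"
        unfolding Ip_def Iy_def
        by (subst integral_diff) (auto intro!: integrable_on_mult_right pst yst simp: integral_mult_right)
      ultimately have h2: "K * Ip - c * Iy \<le> Ig" by simp
      have "Iy \<le> integral {s..t} (\<lambda>r. y t + \<eta>)" unfolding Iy_def
      proof (intro integral_le yst integrable_const_ivl)
        fix r assume r: "r \<in> {s..t}"
        have "dist (y r) (y s) < \<eta>/2" using d r t s by (auto simp: dist_real_def)
        moreover have "dist (y t) (y s) < \<eta>/2" using d t s by (auto simp: dist_real_def)
        ultimately show "y r \<le> y t + \<eta>" unfolding dist_real_def by linarith
      qed
      hence h3: "Iy \<le> (t - s) * (y t + \<eta>)" using t by simp
      have h4: "Ip \<ge> 0" unfolding Ip_def using s t pnn by (intro integral_nonneg pst) auto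
      have "exp (c * t) = E * exp (c * (t - s))" unfolding E_def by (simp add: exp_add[symmetric] algebra_simps)
      also have "\<dots> \<ge> E * (1 + c * (t - s))" using E1 by (intro mult_left_mono exp_ge_add_one_self) auto
      finally have h5: "exp (c * t) - E \<ge> c * E * (t - s)" by (simp add: algebra_simps)
      have h7: "y t \<ge> 0" using ynn t s by auto
      have p1: "E * (y t - y s) \<ge> E * (K * Ip - c * Iy)" using h1 h2 E1 by (intro mult_left_mono) auto
      have p2: "E * (K * Ip) \<ge> 1 * (K * Ip)" using E1 K h4 by (intro mult_right_mono) auto
      have p3: "(exp (c * t) - E) * y t \<ge> (c * E * (t - s)) * y t" using h5 h7 by (intro mult_right_mono) auto
      have p4: "(c * E) * Iy \<le> (c * E) * ((t - s) * (y t + \<eta>))" using h3 cE by (intro mult_left_mono) auto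
      have p5: "(c * E * \<eta>) * (t - s) \<le> e * (t - s)" using h8 t by (intro mult_right_mono) auto
      have "F t - F s = E * (y t - y s) + (exp (c * t) - E) * y t - K * Ip"
        unfolding F_def E_def comb by (simp add: algebra_simps)
      also have "\<dots> \<ge> - e * (t - s)" using p1 p2 p3 p4 p5 by (simp add: algebra_simps)
      finally show "F s - e * (t - s) \<le> F t" by simp
    qed
  qed
  then show ?thesis unfolding F_def by simp
qed


lemma nonneg:
  fixes M :: "nat \<Rightarrow> nat \<Rightarrow> real \<Rightarrow> real" and x :: "nat \<Rightarrow> real \<Rightarrow> real"
  assumes N: "N \<ge> 1"
    and Mb: "\<And>k l s. k \<in> {1..N} \<Longrightarrow> l \<in> {1..N} \<Longrightarrow> s \<ge> 0 \<Longrightarrow> 0 \<le> M k l s \<and> M k l s \<le> 1"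
    and sol: "caratheodory_solution N M x"
    and x0: "\<And>k. k \<in> {1..N} \<Longrightarrow> x k 0 \<ge> \<alpha>"
    and k: "k \<in> {1..N}" and b: "b \<ge> 0"
  shows "x k b \<ge> \<alpha>"
proof -
  define m where "m t = Min ((\<lambda>k. x k t) ` {1..N})" for t
  have fin: "finite {1..N}" and ne: "{1..N} \<noteq> {}" using N by auto
  have "m 0 \<le> m b"
  proof (rule dini_mono[OF b])
    show "continuous_on {0..b} m" unfolding m_def
      by (intro min_cont fin ne carat_cont[OF sol])
  next
    fix s e :: real assume s: "s \<in> {0..<b}" and e: "e > 0"
    have "\<forall>l\<in>{1..N}. \<exists>d>0. \<forall>r\<in>{0..b}. dist r s < d \<longrightarrow> dist (x l r) (x l s) < e/4"
    proof
      fix l assume l: "l \<in> {1..N}"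
      show "\<exists>d>0. \<forall>r\<in>{0..b}. dist r s < d \<longrightarrow> dist (x l r) (x l s) < e/4"
        using carat_cont[OF sol l, of b] s e unfolding continuous_on_iff
        by (metis atLeastAtMost_iff atLeastLessThan_iff divide_pos_pos zero_less_numeral less_eq_real_def)
    qed
    then obtain dd where dd: "\<forall>l\<in>{1..N}. dd l > 0 \<and> (\<forall>r\<in>{0..b}. dist r s < dd l \<longrightarrow> dist (x l r) (x l s) < e/4)"
      by metis
    define d where "d = Min (dd ` {1..N})"
    have d0: "d > 0" unfolding d_def using fin ne dd by (auto simp: Min_gr_iff)
    have dle: "\<And>l. l \<in> {1..N} \<Longrightarrow> d \<le> dd l" unfolding d_def using fin by auto
    show "\<exists>d>0. \<forall>t. s < t \<and> t < s + d \<and> t \<le> b \<longrightarrow> m s - e * (t - s) \<le> m t"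
    proof (intro exI[of _ d] conjI allI impI)
      show "d > 0" by fact
      fix t assume t: "s < t \<and> t < s + d \<and> t \<le> b"
      have s0: "0 \<le> s" using s by auto
      have close: "\<And>l r. l \<in> {1..N} \<Longrightarrow> r \<in> {s..t} \<Longrightarrow> \<bar>x l r - x l s\<bar> < e/4"
      proof -
        fix l r assume l: "l \<in> {1..N}" and r: "r \<in> {s..t}"
        have "dist r s < dd l" using dle[OF l] r t by (auto simp: dist_real_def)
        moreover have "r \<in> {0..b}" using r t s by auto
        ultimately show "\<bar>x l r - x l s\<bar> < e/4" using dd l by (auto simp: dist_real_def)
      qed
      obtain k0 where k0: "k0 \<in> {1..N}" "x k0 t = m t"
      proof -
        have "m t \<in> (\<lambda>k. x k t) ` {1..N}" unfolding m_def using fin ne by (intro Min_in) auto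
        then show ?thesis using that by auto
      qed
      have mle: "\<And>l. l \<in> {1..N} \<Longrightarrow> m t \<le> x l t" unfolding m_def using fin by auto
      have ms: "m s \<le> x k0 s" unfolding m_def using fin k0 by auto
      have D: "cons_rhs N M x k0 integrable_on {s..t} \<and> x k0 t - x k0 s = integral {s..t} (cons_rhs N M x k0)"
        using carat_diff[OF sol k0(1) s0] t by auto
      have "integral {s..t} (\<lambda>r. - e) \<le> integral {s..t} (cons_rhs N M x k0)"
      proof (intro integral_le integrable_const_ivl D[THEN conjunct1])
        fix r assume r: "r \<in> {s..t}"
        have tt: "t \<in> {s..t}" using t by auto
        have "\<And>l. l \<in> {1..N} \<Longrightarrow> M k0 l r * (- e) \<le> M k0 l r * (x l r - x k0 r)"
        proof -
          fix l assume l: "l \<in> {1..N}"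
          have "x l r - x k0 r \<ge> - e"
            using close[OF l r] close[OF l tt] close[OF k0(1) r] close[OF k0(1) tt] mle[OF l] k0(2) by linarith
          then show "M k0 l r * (- e) \<le> M k0 l r * (x l r - x k0 r)"
            using Mb[OF k0(1) l, of r] r s0 by (intro mult_left_mono) auto
        qed
        moreover have "\<And>l. l \<in> {1..N} \<Longrightarrow> - e \<le> M k0 l r * (- e)"
          using Mb k0(1) r s0 e by (auto simp: mult_le_cancel_right1)
        ultimately have "(\<Sum>l\<in>{1..N}. - e) \<le> (\<Sum>l\<in>{1..N}. M k0 l r * (x l r - x k0 r))"
          by (intro sum_mono) (meson order_trans)
        hence "real N * (- e) \<le> (\<Sum>l\<in>{1..N}. M k0 l r * (x l r - x k0 r))" by simp
        hence "(1 / real N) * (real N * (- e)) \<le> (1 / real N) * (\<Sum>l\<in>{1..N}. M k0 l r * (x l r - x k0 r))"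
          by (intro mult_left_mono) auto
        then show "- e \<le> cons_rhs N M x k0 r" unfolding cons_rhs_def using N by simp
      qed
      hence "- e * (t - s) \<le> x k0 t - x k0 s" using D t by (simp add: algebra_simps)
      then show "m s - e * (t - s) \<le> m t" using ms k0(2) by linarith
    qed
  qed
  moreover have "\<alpha> \<le> m 0" unfolding m_def using fin ne x0 by auto
  moreover have "m b \<le> x k b" unfolding m_def using fin k by auto
  ultimately show ?thesis by linarith
qed


theorem proposition5:
  fixes N :: nat and T \<mu> \<alpha> :: real
    and M :: "nat \<Rightarrow> nat \<Rightarrow> real \<Rightarrow> real" and x :: "nat \<Rightarrow> real \<Rightarrow> real"
    and i j :: nat
  assumes "N \<ge> 2" and "T > 0" and "\<mu> > 0"
    and "\<And>k l. k \<in> {1..N} \<Longrightarrow> l \<in> {1..N} \<Longrightarrow> M k l \<in> borel_measurable (lebesgue_on {0..})"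
    and "\<And>k l s. k \<in> {1..N} \<Longrightarrow> l \<in> {1..N} \<Longrightarrow> s \<ge> 0 \<Longrightarrow> 0 \<le> M k l s \<and> M k l s \<le> 1"
    and "caratheodory_solution N M x"
    and "\<And>k. k \<in> {1..N} \<Longrightarrow> x k 0 \<ge> \<alpha>"
    and "i \<in> {1..N}" and "j \<in> {1..N}"
    and "conn_edge T \<mu> M 0 i j"
  shows "x i T \<ge> \<alpha> + (\<mu> * T / (real N + \<mu> * T)) * exp (- 2 * ((real N - 1) / real N) * T) * (x j 0 - \<alpha>)"
proof -
  note N2 = assms(1) and T = assms(2) and mu = assms(3) and Mb = assms(5) and sol = assms(6)
    and x0 = assms(7) and i = assms(8) and j = assms(9) and edge = assms(10)
  have N1: "N \<ge> 1" using N2 by auto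
  define c where "c = (real N - 1) / real N"
  have c0: "c \<ge> 0" unfolding c_def using N1 by auto
  have pos: "\<And>k t. k \<in> {1..N} \<Longrightarrow> t \<ge> 0 \<Longrightarrow> x k t \<ge> \<alpha>"
    using nonneg[OF N1 Mb sol x0] by blast
  have rhs_lb: "cons_rhs N M x k r \<ge> (1 / real N) * (M k l0 r * (x l0 r - \<alpha>)) - c * (x k r - \<alpha>)"
    if "k \<in> {1..N}" "l0 \<in> {1..N}" "l0 \<noteq> k" "r \<ge> 0" for k l0 r
  proof -
    have "(\<Sum>l\<in>{1..N}. M k l r * (x l r - x k r)) \<ge> M k l0 r * (x l0 r - \<alpha>) - (real N - 1) * (x k r - \<alpha>)"
      using that by (intro sum_bound[OF N1]) (auto simp: Mb pos)
    hence "(1 / real N) * (\<Sum>l\<in>{1..N}. M k l r * (x l r - x k r)) \<ge> (1 / real N) * (M k l0 r * (x l0 r - \<alpha>) - (real N - 1) * (x k r - \<alpha>))"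
      by (intro mult_left_mono) auto
    moreover have "(1 / real N) * (M k l0 r * (x l0 r - \<alpha>) - (real N - 1) * (x k r - \<alpha>))
        = (1 / real N) * (M k l0 r * (x l0 r - \<alpha>)) - c * (x k r - \<alpha>)"
      unfolding c_def using N1 by (simp add: field_simps)
    ultimately show ?thesis unfolding cons_rhs_def by linarith
  qed
  have rhs_lb0: "cons_rhs N M x k r \<ge> - c * (x k r - \<alpha>)" if "k \<in> {1..N}" "r \<ge> 0" for k r
  proof -
    obtain l0 where l0: "l0 \<in> {1..N}" "l0 \<noteq> k"
      using N2 that(1) by (metis atLeastAtMost_iff le_numeral_extra(4) nat_le_linear not_one_le_zero one_le_numeral order_trans Suc_1 not_less_eq_eq one_add_one)
    have "0 \<le> (1 / real N) * (M k l0 r * (x l0 r - \<alpha>))"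
      using Mb[OF that(1) l0(1) that(2)] pos[OF l0(1) that(2)] by auto
    then show ?thesis using rhs_lb[OF that(1) l0 that(2)] by linarith
  qed
  have stepB: "exp (c * t) * (x j t - \<alpha>) \<ge> x j 0 - \<alpha>" if t: "t \<ge> 0" for t
  proof -
    have "x j 0 - \<alpha> \<le> exp (c * t) * (x j t - \<alpha>) - 0 * integral {0..t} (\<lambda>_. 0::real)"
    proof (rule expo[OF c0 order_refl t])
      show "continuous_on {0..t} (\<lambda>r. x j r - \<alpha>)" by (intro continuous_intros carat_cont[OF sol j])
      show "\<And>r. r \<in> {0..t} \<Longrightarrow> 0 \<le> x j r - \<alpha>" using pos[OF j] by auto
      show "\<And>s u. 0 \<le> s \<Longrightarrow> s \<le> u \<Longrightarrow> u \<le> t \<Longrightarrow> cons_rhs N M x j integrable_on {s..u} \<and> (x j u - \<alpha>) - (x j s - \<alpha>) = integral {s..u} (cons_rhs N M x j)"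
        using carat_diff[OF sol j] by auto
      show "(\<lambda>_. 0::real) integrable_on {0..t}" by (rule integrable_0)
      show "\<And>r. r \<in> {0..t} \<Longrightarrow> 0 \<le> (0::real)" by simp
      show "\<And>r. r \<in> {0..t} \<Longrightarrow> 0 * 0 - c * (x j r - \<alpha>) \<le> cons_rhs N M x j r"
        using rhs_lb0[OF j] by auto
    qed
    then show ?thesis by simp
  qed
  define \<eta> where "\<eta> = \<mu> * T / (real N + \<mu> * T)"
  have \<eta>0: "\<eta> \<ge> 0" unfolding \<eta>_def using mu T by auto
  have \<eta>1: "\<eta> \<le> \<mu> * T / real N" unfolding \<eta>_def using mu T N1
    by (intro divide_left_mono) (auto intro!: mult_pos_pos add_pos_pos)
  have \<eta>2: "\<eta> \<le> 1" unfolding \<eta>_def using mu T N1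
    by (subst divide_le_eq_1) (auto intro!: add_pos_pos mult_pos_pos)
  have xj0: "x j 0 - \<alpha> \<ge> 0" using x0[OF j] by auto
  have ecT: "exp (- 2 * c * T) \<le> exp (- c * T)" using c0 T by auto
  have goal_form: "- 2 * ((real N - 1) / real N) * T = - 2 * c * T" unfolding c_def by simp
  show ?thesis
  proof (cases "i = j")
    case True
    have "exp (c * T) * (x i T - \<alpha>) \<ge> x i 0 - \<alpha>" using stepB[of T] T True by auto
    hence "x i T - \<alpha> \<ge> exp (- c * T) * (x i 0 - \<alpha>)"
      by (simp add: exp_minus field_simps)
    moreover have "\<eta> * exp (- 2 * c * T) * (x j 0 - \<alpha>) \<le> 1 * exp (- c * T) * (x j 0 - \<alpha>)"
      using \<eta>0 \<eta>2 ecT xj0 by (intro mult_right_mono mult_mono) auto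
    ultimately show ?thesis unfolding goal_form \<eta>_def[symmetric] using True by simp
  next
    case False
    define K where "K = exp (- c * T) * (x j 0 - \<alpha>) / real N"
    have K0: "K \<ge> 0" unfolding K_def using xj0 by auto
    have pint: "M i j integrable_on {0..T}"
    proof (rule ccontr)
      assume "\<not> ?thesis"
      hence "integral {0..T} (M i j) = 0" by (rule not_integrable_integral)
      with edge mu show False unfolding conn_edge_def by simp
    qed
    have Iint: "integral {0..T} (M i j) \<ge> \<mu> * T"
      using edge T unfolding conn_edge_def by (simp add: field_simps)
    have "x i 0 - \<alpha> \<le> exp (c * T) * (x i T - \<alpha>) - K * integral {0..T} (M i j)"
    proof (rule expo[OF c0 K0 less_imp_le[OF T]])
      show "continuous_on {0..T} (\<lambda>r. x i r - \<alpha>)" by (intro continuous_intros carat_cont[OF sol i])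
      show "\<And>r. r \<in> {0..T} \<Longrightarrow> 0 \<le> x i r - \<alpha>" using pos[OF i] by auto
      show "\<And>s u. 0 \<le> s \<Longrightarrow> s \<le> u \<Longrightarrow> u \<le> T \<Longrightarrow> cons_rhs N M x i integrable_on {s..u} \<and> (x i u - \<alpha>) - (x i s - \<alpha>) = integral {s..u} (cons_rhs N M x i)"
        using carat_diff[OF sol i] by auto
      show "M i j integrable_on {0..T}" by fact
      show "\<And>r. r \<in> {0..T} \<Longrightarrow> 0 \<le> M i j r" using Mb[OF i j] by auto
      fix r assume r: "r \<in> {0..T}"
      have r0: "r \<ge> 0" using r by auto
      have "exp (c * r) * (x j r - \<alpha>) \<ge> x j 0 - \<alpha>" by (rule stepB[OF r0])
      hence "x j r - \<alpha> \<ge> exp (- c * r) * (x j 0 - \<alpha>)" by (simp add: exp_minus field_simps)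
      moreover have "exp (- c * T) * (x j 0 - \<alpha>) \<le> exp (- c * r) * (x j 0 - \<alpha>)"
        using r c0 xj0 by (intro mult_right_mono) (auto simp: mult_left_mono)
      ultimately have xjr: "x j r - \<alpha> \<ge> exp (- c * T) * (x j 0 - \<alpha>)" by linarith
      have "M i j r * (exp (- c * T) * (x j 0 - \<alpha>)) \<le> M i j r * (x j r - \<alpha>)"
        using xjr Mb[OF i j r0] by (intro mult_left_mono) auto
      hence "(1 / real N) * (M i j r * (exp (- c * T) * (x j 0 - \<alpha>))) \<le> (1 / real N) * (M i j r * (x j r - \<alpha>))"
        by (rule mult_left_mono) auto
      moreover have "K * M i j r = (1 / real N) * (M i j r * (exp (- c * T) * (x j 0 - \<alpha>)))"
        unfolding K_def by simp
      ultimately have "K * M i j r \<le> (1 / real N) * (M i j r * (x j r - \<alpha>))" by simp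
      then show "K * M i j r - c * (x i r - \<alpha>) \<le> cons_rhs N M x i r"
        using rhs_lb[OF i j _ r0] False by force
    qed
    moreover have "x i 0 - \<alpha> \<ge> 0" using x0[OF i] by auto
    moreover have "K * (\<mu> * T) \<le> K * integral {0..T} (M i j)" using Iint K0 by (intro mult_left_mono)
    ultimately have "K * (\<mu> * T) \<le> exp (c * T) * (x i T - \<alpha>)" by linarith
    hence "exp (- c * T) * (K * (\<mu> * T)) \<le> exp (- c * T) * (exp (c * T) * (x i T - \<alpha>))"
      by (intro mult_left_mono) auto
    hence A: "exp (- c * T) * (K * (\<mu> * T)) \<le> x i T - \<alpha>"
      by (simp add: mult.assoc[symmetric] exp_add[symmetric])
    have "exp (- c * T) * (K * (\<mu> * T)) = (\<mu> * T / real N) * exp (- 2 * c * T) * (x j 0 - \<alpha>)"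
      unfolding K_def by (simp add: field_simps exp_add[symmetric])
    moreover have "\<eta> * exp (- 2 * c * T) * (x j 0 - \<alpha>) \<le> (\<mu> * T / real N) * exp (- 2 * c * T) * (x j 0 - \<alpha>)"
      using \<eta>1 xj0 by (intro mult_right_mono) auto
    ultimately show ?thesis unfolding goal_form \<eta>_def[symmetric] using A by linarith
  qed
qed

end
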